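(* Consider the class of three-valued logics (as defined in the context) that are paraconsistent and have properties (a) and (b). There are exactly 16 logics in this class whose logical equivalence relation $\equiv$ satisfies, for all formulas $A,B$, all of the following: (1) $A\wedge\bot \equiv \bot$; (2) $A\vee\top\equiv\top$; (3) $A\wedge\top\equiv A$; (4) $A\vee\bot\equiv A$; (5) $A\wedge A\equiv A$; (6) $A\vee A\equiv A$; (7) $A\wedge B\equiv B\wedge A$; (8) $A\vee B\equiv B\vee A$; (9) $\neg\neg A\equiv A$.
   Context: Formulas are built from a countably infinite set of propositional variables, the constant $\bot$, the unary connective $\neg$ and the binary connectives $\wedge,\vee,\to$; $\top$ abbreviates $\neg\bot$. Let $V=\{t,f,b\}$. A three-valued logic is specified by truth functions $\neg^M:V\to V$ and $\wedge^M,\vee^M,\to^M:V^2\to V$ that agree with the classical truth functions of negation, conjunction, disjunction and material implication on $\{t,f\}$, with $\bot$ interpreted as $f$; two logics are different iff at least one of these truth functions differs. A valuation is a map $\nu$ from formulas to $V$ with $\nu(\bot)=f$, $\nu(\neg A)=\neg^M(\nu(A))$, $\nu(A\wedge B)=\wedge^M(\nu(A),\nu(B))$, and similarly for $\vee,\to$ (values on propositional variables are arbitrary). The designated values are $t$ and $b$: $\Gamma\models A$ iff for every valuation $\nu$, either $\nu(A')=f$ for some $A'\in\Gamma$ or $\nu(A)\in\{t,b\}$. The logic is paraconsistent if there are formulas $A,B$ with $\{A,\neg A\}\not\models B$. Its logical equivalence relation is: $A\equiv B$ iff $\nu(A)=\nu(B)$ for every valuation $\nu$. Property (a): for every set of formulas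 $\Gamma$ and formula $A$, $\Gamma\models A$ implies $\Gamma\models_{\mathrm{CPL}}A$, where $\models_{\mathrm{CPL}}$ is the consequence relation of classical propositional logic (with $\bot$ false, $\to$ material implication). Property (b): for all sets $\Gamma$ and formulas $A,B,C$: (b1) $\Gamma\cup\{A\}\models B$ iff $\Gamma\models A\to B$; (b2) $\Gamma\models A\wedge B$ iff $\Gamma\models A$ and $\Gamma\models B$; (b3) $\Gamma\cup\{A\vee B\}\models C$ iff $\Gamma\cup\{A\}\models C$ and $\Gamma\cup\{B\}\models C$. *)

theory Defs
  imports Main
begin

datatype V = t | f | b

datatype form = Var nat | Bot | Neg form | Conj form form | Disj form form | Imp form form

definition Top :: form where "Top = Neg Bot"

text \<open>A three-valued logic: truth functions (negation, conjunction, disjunction, implication).\<close>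
type_synonym logic = "(V \<Rightarrow> V) \<times> (V \<Rightarrow> V \<Rightarrow> V) \<times> (V \<Rightarrow> V \<Rightarrow> V) \<times> (V \<Rightarrow> V \<Rightarrow> V)"

definition classical_agree :: "logic \<Rightarrow> bool" where
  "classical_agree L = (case L of (ng, cj, dj, im) \<Rightarrow>
     ng t = f \<and> ng f = t \<and>
     cj t t = t \<and> cj t f = f \<and> cj f t = f \<and> cj f f = f \<and>
     dj t t = t \<and> dj t f = t \<and> dj f t = t \<and> dj f f = f \<and>
     im t t = t \<and> im t f = f \<and> im f t = t \<and> im f f = t)"

definition valuation :: "logic \<Rightarrow> (form \<Rightarrow> V) \<Rightarrow> bool" where
  "valuation L \<nu> = (case L of (ng, cj, dj, im) \<Rightarrow>
     \<nu> Bot = f \<and>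
     (\<forall>A. \<nu> (Neg A) = ng (\<nu> A)) \<and>
     (\<forall>A B. \<nu> (Conj A B) = cj (\<nu> A) (\<nu> B)) \<and>
     (\<forall>A B. \<nu> (Disj A B) = dj (\<nu> A) (\<nu> B)) \<and>
     (\<forall>A B. \<nu> (Imp A B) = im (\<nu> A) (\<nu> B)))"

definition entails :: "logic \<Rightarrow> form set \<Rightarrow> form \<Rightarrow> bool" where
  "entails L \<Gamma> A = (\<forall>\<nu>. valuation L \<nu> \<longrightarrow> (\<exists>A'\<in>\<Gamma>. \<nu> A' = f) \<or> \<nu> A \<in> {t, b})"

fun ceval :: "(nat \<Rightarrow> bool) \<Rightarrow> form \<Rightarrow> bool" where
  "ceval s (Var n) = s n"
| "ceval s Bot = False"
| "ceval s (Neg A) = (\<not> ceval s A)"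
| "ceval s (Conj A B) = (ceval s A \<and> ceval s B)"
| "ceval s (Disj A B) = (ceval s A \<or> ceval s B)"
| "ceval s (Imp A B) = (ceval s A \<longrightarrow> ceval s B)"

definition cpl_entails :: "form set \<Rightarrow> form \<Rightarrow> bool" where
  "cpl_entails \<Gamma> A = (\<forall>s. (\<forall>A'\<in>\<Gamma>. ceval s A') \<longrightarrow> ceval s A)"

definition paraconsistent :: "logic \<Rightarrow> bool" where
  "paraconsistent L = (\<exists>A B. \<not> entails L {A, Neg A} B)"

definition prop_a :: "logic \<Rightarrow> bool" where
  "prop_a L = (\<forall>\<Gamma> A. entails L \<Gamma> A \<longrightarrow> cpl_entails \<Gamma> A)"

definition prop_b :: "logic \<Rightarrow> bool" where
  "prop_b L = (\<forall>\<Gamma> A B C.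
     (entails L (\<Gamma> \<union> {A}) B = entails L \<Gamma> (Imp A B)) \<and>
     (entails L \<Gamma> (Conj A B) = (entails L \<Gamma> A \<and> entails L \<Gamma> B)) \<and>
     (entails L (\<Gamma> \<union> {Disj A B}) C = (entails L (\<Gamma> \<union> {A}) C \<and> entails L (\<Gamma> \<union> {B}) C)))"

definition lequiv :: "logic \<Rightarrow> form \<Rightarrow> form \<Rightarrow> bool" where
  "lequiv L A B = (\<forall>\<nu>. valuation L \<nu> \<longrightarrow> \<nu> A = \<nu> B)"

definition laws :: "logic \<Rightarrow> bool" where
  "laws L = (\<forall>A B.
     lequiv L (Conj A Bot) Bot \<and>
     lequiv L (Disj A Top) Top \<and>
     lequiv L (Conj A Top) A \<and>
     lequiv L (Disj A Bot) A \<and>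
     lequiv L (Conj A A) A \<and>
     lequiv L (Disj A A) A \<and>
     lequiv L (Conj A B) (Conj B A) \<and>
     lequiv L (Disj A B) (Disj B A) \<and>
     lequiv L (Neg (Neg A)) A)"

end

theory Submission
  imports Defs
begin

fun ev :: "logic \<Rightarrow> (nat \<Rightarrow> V) \<Rightarrow> form \<Rightarrow> V" where
  "ev L v (Var n) = v n"
| "ev L v Bot = f"
| "ev L v (Neg A) = fst L (ev L v A)"
| "ev L v (Conj A B) = fst (snd L) (ev L v A) (ev L v B)"
| "ev L v (Disj A B) = fst (snd (snd L)) (ev L v A) (ev L v B)"
| "ev L v (Imp A B) = snd (snd (snd L)) (ev L v A) (ev L v B)"

lemma valuation_ev: "valuation L (ev L v)"
  by (cases L) (auto simp: valuation_def)

definition ng0 :: "V \<Rightarrow> V" where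
  "ng0 x = (case x of t \<Rightarrow> f | f \<Rightarrow> t | b \<Rightarrow> b)"
definition cj0 :: "V \<Rightarrow> V \<Rightarrow> V" where
  "cj0 x y = (if x = f \<or> y = f then f else if x = b \<or> y = b then b else t)"
definition dj0 :: "V \<Rightarrow> V \<Rightarrow> V" where
  "dj0 x y = (if x = t \<or> y = t then t else if x = b \<or> y = b then b else f)"
definition mkim :: "V \<Rightarrow> V \<Rightarrow> V \<Rightarrow> V \<Rightarrow> V \<Rightarrow> V \<Rightarrow> V" where
  "mkim p q r s x y = (case x of
      f \<Rightarrow> (case y of b \<Rightarrow> p | _ \<Rightarrow> t)
    | t \<Rightarrow> (case y of t \<Rightarrow> t | f \<Rightarrow> f | b \<Rightarrow> q)
    | b \<Rightarrow> (case y of t \<Rightarrow> r | f \<Rightarrow> f | b \<Rightarrow> s))"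

definition v2 :: "V \<Rightarrow> V \<Rightarrow> nat \<Rightarrow> V" where
  "v2 x y = (\<lambda>n. if n = 0 then x else y)"

lemma nec:
  assumes pb: "prop_b L" and lw0: "laws L" and ca: "classical_agree L"
    and L: "L = (ng,cj,dj,im)"
  shows "ng = ng0 \<and> cj = cj0 \<and> dj = dj0 \<and>
    (\<exists>p q r s. p \<in> {t,b} \<and> q \<in> {t,b} \<and> r \<in> {t,b} \<and> s \<in> {t,b} \<and> im = mkim p q r s)"
proof -
  have lw: "cj x f = f \<and> dj x t = t \<and> cj x t = x \<and> dj x f = x \<and> cj x x = x \<and> dj x x = x
     \<and> cj x y = cj y x \<and> dj x y = dj y x \<and> ng (ng x) = x" for x y
  proof -
    have "\<forall>A B. lequiv L (Conj A Bot) Bot \<and>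
     lequiv L (Disj A Top) Top \<and>
     lequiv L (Conj A Top) A \<and>
     lequiv L (Disj A Bot) A \<and>
     lequiv L (Conj A A) A \<and>
     lequiv L (Disj A A) A \<and>
     lequiv L (Conj A B) (Conj B A) \<and>
     lequiv L (Disj A B) (Disj B A) \<and>
     lequiv L (Neg (Neg A)) A" using lw0 by (simp add: laws_def)
    then have h: "lequiv L (Conj (Var 0) Bot) Bot \<and>
     lequiv L (Disj (Var 0) Top) Top \<and>
     lequiv L (Conj (Var 0) Top) (Var 0) \<and>
     lequiv L (Disj (Var 0) Bot) (Var 0) \<and>
     lequiv L (Conj (Var 0) (Var 0)) (Var 0) \<and>
     lequiv L (Disj (Var 0) (Var 0)) (Var 0) \<and>
     lequiv L (Conj (Var 0) (Var 1)) (Conj (Var 1) (Var 0)) \<and>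
     lequiv L (Disj (Var 0) (Var 1)) (Disj (Var 1) (Var 0)) \<and>
     lequiv L (Neg (Neg (Var 0))) (Var 0)" by blast
    show ?thesis using h valuation_ev[of L "v2 x y"] ca
      unfolding lequiv_def
      by (auto simp: L v2_def Top_def classical_agree_def)
  qed
  have ca': "ng t = f \<and> ng f = t \<and>
     cj t t = t \<and> cj t f = f \<and> cj f t = f \<and> cj f f = f \<and>
     dj t t = t \<and> dj t f = t \<and> dj f t = t \<and> dj f f = f \<and>
     im t t = t \<and> im t f = f \<and> im f t = t \<and> im f f = t"
    using ca by (simp add: classical_agree_def L)
  have ngb: "ng b = b" using lw[of b b] ca' by (cases "ng b") auto
  have "ng = ng0"
  proof
    fix x show "ng x = ng0 x" using ngb ca' by (cases x) (auto simp: ng0_def)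
  qed
  moreover have "cj = cj0"
  proof (intro ext)
    fix x y show "cj x y = cj0 x y"
      using ca' lw[of b b] lw[of b f] lw[of f b] lw[of b t] lw[of t b]
      by (cases x; cases y) (auto simp: cj0_def)
  qed
  moreover have "dj = dj0"
  proof (intro ext)
    fix x y show "dj x y = dj0 x y"
      using ca' lw[of b b] lw[of b f] lw[of f b] lw[of b t] lw[of t b]
      by (cases x; cases y) (auto simp: dj0_def)
  qed
  moreover
  have b1: "entails L (\<Gamma> \<union> {A}) B = entails L \<Gamma> (Imp A B)" for \<Gamma> A B
    using pb by (simp add: prop_b_def)
  have i1: "im x y \<noteq> f" if "y \<noteq> f" for x y
  proof -
    have "entails L ({Var 1} \<union> {Var 0}) (Var 1)" by (auto simp: entails_def) (metis V.exhaust)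
    then have "entails L {Var 1} (Imp (Var 0) (Var 1))" using b1 by blast
    then show ?thesis using valuation_ev[of L "v2 x y"] that
      by (cases y) (auto simp: entails_def L v2_def)
  qed
  have i2: "im f y \<noteq> f" for y
  proof -
    have "entails L ({} \<union> {Bot}) (Var 1)" using valuation_ev
      by (auto simp: entails_def L valuation_def)
    then have "entails L {} (Imp Bot (Var 1))" using b1 by blast
    then show ?thesis using valuation_ev[of L "v2 y y"]
      by (cases y) (auto simp: entails_def L v2_def)
  qed
  have i3: "im b f = f"
  proof -
    have "entails L {Imp (Var 0) (Var 1)} (Imp (Var 0) (Var 1))" by (auto simp: entails_def) (metis V.exhaust)
    then have "entails L ({Imp (Var 0) (Var 1)} \<union> {Var 0}) (Var 1)" using b1 by blast
    then show ?thesis using valuation_ev[of L "v2 b f"]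
      by (auto simp: entails_def L v2_def)
  qed
  have "im = mkim (im f b) (im t b) (im b t) (im b b)"
  proof (intro ext)
    fix x y show "im x y = mkim (im f b) (im t b) (im b t) (im b b) x y"
      using ca' i3 by (cases x; cases y) (auto simp: mkim_def)
  qed
  moreover have "im f b \<in> {t,b}" "im t b \<in> {t,b}" "im b t \<in> {t,b}" "im b b \<in> {t,b}"
    using i1[of b t] i1[of t b] i1[of b b] i2[of b]
    by (cases "im f b"; simp; cases "im t b"; simp; cases "im b t"; simp; cases "im b b"; simp)+
  ultimately show ?thesis by blast
qed


lemma val_simps:
  assumes "valuation (ng,cj,dj,im) \<nu>"
  shows "\<nu> Bot = f" "\<nu> (Neg A) = ng (\<nu> A)" "\<nu> (Conj A B) = cj (\<nu> A) (\<nu> B)"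
    "\<nu> (Disj A B) = dj (\<nu> A) (\<nu> B)" "\<nu> (Imp A B) = im (\<nu> A) (\<nu> B)"
  using assms by (simp_all add: valuation_def)

lemma entails_alt:
  "entails L \<Gamma> A = (\<forall>\<nu>. valuation L \<nu> \<longrightarrow> (\<forall>A'\<in>\<Gamma>. \<nu> A' \<noteq> f) \<longrightarrow> \<nu> A \<noteq> f)"
proof -
  have "(x \<in> {t,b}) = (x \<noteq> f)" for x by (cases x) auto
  then show ?thesis unfolding entails_def by auto
qed

lemma suff:
  assumes P: "p \<in> {t,b}" "q \<in> {t,b}" "r \<in> {t,b}" "s \<in> {t,b}"
    and L: "L = (ng0,cj0,dj0,mkim p q r s)"
  shows "classical_agree L \<and> paraconsistent L \<and> prop_a L \<and> prop_b L \<and> laws L"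
proof -
  have ca: "classical_agree L"
    by (simp add: L classical_agree_def ng0_def cj0_def dj0_def mkim_def)
  have pc: "paraconsistent L"
    unfolding paraconsistent_def
  proof (intro exI)
    show "\<not> entails L {Var 0, Neg (Var 0)} Bot"
      using valuation_ev[of L "\<lambda>n. b"]
      by (auto simp: entails_def L ng0_def)
  qed
  have cl: "ev L (\<lambda>n. if sv n then t else f) A = (if ceval sv A then t else f)" for sv A
    by (induction A) (auto simp: L ng0_def cj0_def dj0_def mkim_def)
  have pa: "prop_a L"
    unfolding prop_a_def cpl_entails_def
  proof (intro allI impI)
    fix \<Gamma> A sv
    assume e: "entails L \<Gamma> A" and g: "\<forall>A'\<in>\<Gamma>. ceval sv A'"
    have v: "valuation L (\<lambda>A. if ceval sv A then t else f)"
      using valuation_ev[of L "\<lambda>n. if sv n then t else f"] unfolding cl by simp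
    from e[unfolded entails_def, rule_format, OF v] g show "ceval sv A"
      by (auto split: if_splits)
  qed
  have dI: "(\<nu> (Imp A B) \<noteq> f) = (\<nu> A \<noteq> f \<longrightarrow> \<nu> B \<noteq> f)" if v: "valuation L \<nu>" for \<nu> A B
    using P val_simps(5)[OF v[unfolded L], of A B] by (cases "\<nu> A"; cases "\<nu> B"; auto simp: mkim_def)
  have dC: "(\<nu> (Conj A B) \<noteq> f) = (\<nu> A \<noteq> f \<and> \<nu> B \<noteq> f)" if v: "valuation L \<nu>" for \<nu> A B
    using P val_simps(3)[OF v[unfolded L], of A B] by (cases "\<nu> A"; cases "\<nu> B"; auto simp: cj0_def)
  have dD: "(\<nu> (Disj A B) \<noteq> f) = (\<nu> A \<noteq> f \<or> \<nu> B \<noteq> f)" if v: "valuation L \<nu>" for \<nu> A B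
    using P val_simps(4)[OF v[unfolded L], of A B] by (cases "\<nu> A"; cases "\<nu> B"; auto simp: dj0_def)
  have pb: "prop_b L"
    unfolding prop_b_def entails_alt
  proof (intro allI conjI)
    fix \<Gamma> A B C
    show "(\<forall>\<nu>. valuation L \<nu> \<longrightarrow> (\<forall>A'\<in>\<Gamma> \<union> {A}. \<nu> A' \<noteq> f) \<longrightarrow> \<nu> B \<noteq> f) =
       (\<forall>\<nu>. valuation L \<nu> \<longrightarrow> (\<forall>A'\<in>\<Gamma>. \<nu> A' \<noteq> f) \<longrightarrow> \<nu> (Imp A B) \<noteq> f)"
      using dI by auto
    show "(\<forall>\<nu>. valuation L \<nu> \<longrightarrow> (\<forall>A'\<in>\<Gamma>. \<nu> A' \<noteq> f) \<longrightarrow> \<nu> (Conj A B) \<noteq> f) =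
       ((\<forall>\<nu>. valuation L \<nu> \<longrightarrow> (\<forall>A'\<in>\<Gamma>. \<nu> A' \<noteq> f) \<longrightarrow> \<nu> A \<noteq> f) \<and>
        (\<forall>\<nu>. valuation L \<nu> \<longrightarrow> (\<forall>A'\<in>\<Gamma>. \<nu> A' \<noteq> f) \<longrightarrow> \<nu> B \<noteq> f))"
      using dC by auto
    show "(\<forall>\<nu>. valuation L \<nu> \<longrightarrow> (\<forall>A'\<in>\<Gamma> \<union> {Disj A B}. \<nu> A' \<noteq> f) \<longrightarrow> \<nu> C \<noteq> f) =
       ((\<forall>\<nu>. valuation L \<nu> \<longrightarrow> (\<forall>A'\<in>\<Gamma> \<union> {A}. \<nu> A' \<noteq> f) \<longrightarrow> \<nu> C \<noteq> f) \<and>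
        (\<forall>\<nu>. valuation L \<nu> \<longrightarrow> (\<forall>A'\<in>\<Gamma> \<union> {B}. \<nu> A' \<noteq> f) \<longrightarrow> \<nu> C \<noteq> f))"
      using dD by auto
  qed
  have lw: "laws L"
    unfolding laws_def lequiv_def
  proof (intro allI conjI impI)
    fix A B \<nu> assume v: "valuation L \<nu>"
    note vs = val_simps[OF v[unfolded L]]
    show "\<nu> (Conj A Bot) = \<nu> Bot" "\<nu> (Disj A Top) = \<nu> Top" "\<nu> (Conj A Top) = \<nu> A"
      "\<nu> (Disj A Bot) = \<nu> A" "\<nu> (Conj A A) = \<nu> A" "\<nu> (Disj A A) = \<nu> A"
      "\<nu> (Conj A B) = \<nu> (Conj B A)" "\<nu> (Disj A B) = \<nu> (Disj B A)" "\<nu> (Neg (Neg A)) = \<nu> A"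
      apply (simp_all add: vs Top_def ng0_def cj0_def dj0_def split: V.split)
      by (cases "\<nu> A"; simp)+
  qed
  show ?thesis using ca pc pa pb lw by blast
qed

lemma set_eq:
  "{L :: logic. classical_agree L \<and> paraconsistent L \<and> prop_a L \<and> prop_b L \<and> laws L}
   = (\<lambda>(p,q,r,s). (ng0,cj0,dj0,mkim p q r s)) ` ({t,b} \<times> {t,b} \<times> {t,b} \<times> {t,b})"
proof (intro equalityI subsetI)
  fix L assume "L \<in> {L :: logic. classical_agree L \<and> paraconsistent L \<and> prop_a L \<and> prop_b L \<and> laws L}"
  then have h: "classical_agree L" "prop_b L" "laws L" by auto
  obtain ng cj dj im where L: "L = (ng,cj,dj,im)" by (cases L) auto
  from nec[OF h(2) h(3) h(1) L] show "L \<in> (\<lambda>(p,q,r,s). (ng0,cj0,dj0,mkim p q r s)) ` ({t,b} \<times> {t,b} \<times> {t,b} \<times> {t,b})"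
    unfolding L by (auto simp: image_iff)
next
  fix L assume "L \<in> (\<lambda>(p,q,r,s). (ng0,cj0,dj0,mkim p q r s)) ` ({t,b} \<times> {t,b} \<times> {t,b} \<times> {t,b})"
  then obtain p q r s where P: "p \<in> {t,b}" "q \<in> {t,b}" "r \<in> {t,b}" "s \<in> {t,b}"
    and L: "L = (ng0,cj0,dj0,mkim p q r s)" by auto
  show "L \<in> {L :: logic. classical_agree L \<and> paraconsistent L \<and> prop_a L \<and> prop_b L \<and> laws L}"
    using suff[OF P L] by simp
qed

lemma inj: "inj_on (\<lambda>(p,q,r,s). (ng0,cj0,dj0,mkim p q r s)) X"
proof (rule inj_onI, clarsimp)
  fix p q r s p' q' r' s'
  assume "mkim p q r s = mkim p' q' r' s'"
  then have "mkim p q r s f b = mkim p' q' r' s' f b" "mkim p q r s t b = mkim p' q' r' s' t b"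
    "mkim p q r s b t = mkim p' q' r' s' b t" "mkim p q r s b b = mkim p' q' r' s' b b" by simp_all
  then show "p = p' \<and> q = q' \<and> r = r' \<and> s = s'" by (simp add: mkim_def)
qed

theorem corollary1:
  shows "card {L :: logic. classical_agree L \<and> paraconsistent L \<and> prop_a L \<and> prop_b L \<and> laws L} = 16"
  unfolding set_eq
  by (subst card_image[OF inj]) (simp add: card_cartesian_product)

end
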